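(* Let $X,Y$ be infinite-dimensional Hilbert spaces, suppose Assumption A and the source condition of the context hold, put $r:=\frac{2a+2}{a}$, and fix constants $k,l\in(1,\infty)$. Then there exist constants $C,\delta_0>0$ such that, whenever $\delta\le\delta_0$, $\|f^\delta-f^\dagger\|\le\delta$ and case (b) of the discrepancy principle applies, the regularization parameter $\alpha_\ast$ chosen by the discrepancy principle satisfies $$\alpha_\ast\ge C\,\delta^r(-\ln(c\delta))^{\kappa r}.$$
   Context: Let $B:\mathcal{D}(B)\subset X\to X$ be a densely defined, selfadjoint, unbounded linear operator with $\|Bu\|\ge m\|u\|$ for all $u\in\mathcal{D}(B)$, some $m>0$. Hilbert scale: $X_\tau=\mathcal{D}(B^\tau)$ for $\tau>0$, $X_\tau=X$ for $\tau\le0$, with $\|u\|_\tau=\|B^\tau u\|$. $F:\mathcal{D}(F)\subset X\to Y$ a (nonlinear) operator, $u^\dagger\in\mathcal{D}(F)$, $Fu^\dagger=f^\dagger$, $\overline{u}$ an initial guess. $T_\alpha^\delta(u)=\|Fu-f^\delta\|^2+\alpha\|u-\overline{u}\|_1^2$ ($=+\infty$ if $u\notin X_1$); $u_\alpha^\delta$ denotes a minimizer of $T_\alpha^\delta$ over $\mathcal{D}(F)$. Assumption A: (a) $F$ is sequentially continuous on $\mathcal{D}(F)$ w.r.t. the weak topologies of $X$ and $Y$; (b) $\mathcal{D}(F)$ is closed and convex; (c) $\mathcal{D}:=\mathcal{D}(F)\cap X_1\neq\emptyset$ and $\overline{u}\in\mathcal{D}$; (d) $u^\dagger$ is an interior point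 of $\mathcal{D}(F)$; (e) $\|f^\delta-f^\dagger\|\le\delta$; (f) there are $a>0$ and $0<c_a\le C_a<\infty$ with $c_a\|u-u^\dagger\|_{-a}\le\|Fu-f^\dagger\|\le C_a\|u-u^\dagger\|_{-a}$ for all $u\in\mathcal{D}$. Source condition: $G:=B^{-(2a+2)}$; $\kappa>0$, $c\in(0,\|G\|^{-1})$, $\varphi(t)=(-\ln(ct))^{-\kappa}$ on $(0,\|G\|]$; $u^\dagger-\overline{u}=\varphi(G)w$ with $w\in X$, $\|w\|\le\rho$, $\rho>0$. Discrepancy principle (constants $k,l>1$): (a) if $\|F\overline{u}-f^\delta\|\le k\delta$, set $u_{\alpha_\ast}^\delta:=\overline{u}$ ($\alpha_\ast=\infty$); (b) if $\|F\overline{u}-f^\delta\|>k\delta$, choose $\alpha_\ast\in(0,\infty)$ such that $\|Fu_{\alpha_\ast}^\delta-f^\delta\|\le k\delta\le\|Fu_{\gamma_\ast}^\delta-f^\delta\|$ for some $\gamma_\ast\in[\alpha_\ast,l\alpha_\ast]$. *)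

theory Defs
  imports "HOL-Analysis.Analysis"
begin

definition infinite_dim :: "'a::real_vector set \<Rightarrow> bool" where
  "infinite_dim V \<longleftrightarrow> \<not> (\<exists>S. finite S \<and> S \<subseteq> V \<and> span S = V)"

definition weak_conv :: "(nat \<Rightarrow> 'a::real_inner) \<Rightarrow> 'a \<Rightarrow> bool" where
  "weak_conv xs x \<longleftrightarrow> (\<forall>y. (\<lambda>n. inner (xs n) y) \<longlonglongrightarrow> inner x y)"

definition weakly_seq_cont_on :: "'a::real_inner set \<Rightarrow> ('a \<Rightarrow> 'b::real_inner) \<Rightarrow> bool" where
  "weakly_seq_cont_on S F \<longleftrightarrow>
     (\<forall>xs x. (\<forall>n. xs n \<in> S) \<longrightarrow> x \<in> S \<longrightarrow> weak_conv xs x \<longrightarrow> weak_conv (\<lambda>n. F (xs n)) (F x))"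

text \<open>Densely defined selfadjoint linear operator with domain D (B* = B, D(B* ) = D(B)).\<close>
definition selfadjoint_op :: "'a::real_inner set \<Rightarrow> ('a \<Rightarrow> 'a) \<Rightarrow> bool" where
  "selfadjoint_op D B \<longleftrightarrow>
     subspace D \<and>
     (\<forall>x\<in>D. \<forall>y\<in>D. B (x + y) = B x + B y) \<and>
     (\<forall>c. \<forall>x\<in>D. B (c *\<^sub>R x) = c *\<^sub>R B x) \<and>
     closure D = UNIV \<and>
     (\<forall>v z. (\<forall>u\<in>D. inner (B u) v = inner u z) \<longleftrightarrow> (v \<in> D \<and> z = B v))"

definition unbounded_op :: "'a::real_normed_vector set \<Rightarrow> ('a \<Rightarrow> 'a) \<Rightarrow> bool" where
  "unbounded_op D B \<longleftrightarrow> \<not> (\<exists>K. \<forall>u\<in>D. norm (B u) \<le> K * norm u)"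

definition sq_int :: "'w measure \<Rightarrow> ('w \<Rightarrow> real) \<Rightarrow> bool" where
  "sq_int M f \<longleftrightarrow> f \<in> borel_measurable M \<and> integrable M (\<lambda>\<omega>. (f \<omega>)\<^sup>2)"

text \<open>Spectral (multiplication-operator) representation of (D,B): U is a unitary map
  X \<rightarrow> L^2(M) and B corresponds to multiplication by lam.\<close>
definition spectral_rep ::
  "'w measure \<Rightarrow> ('w \<Rightarrow> real) \<Rightarrow> ('a::real_inner \<Rightarrow> 'w \<Rightarrow> real) \<Rightarrow> 'a set \<Rightarrow> ('a \<Rightarrow> 'a) \<Rightarrow> bool" where
  "spectral_rep M lam U D B \<longleftrightarrow>
     lam \<in> borel_measurable M \<and>
     (\<forall>x. sq_int M (U x)) \<and>
     (\<forall>x y \<omega>. U (x + y) \<omega> = U x \<omega> + U y \<omega>) \<and>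
     (\<forall>c x \<omega>. U (c *\<^sub>R x) \<omega> = c * U x \<omega>) \<and>
     (\<forall>x. (norm x)\<^sup>2 = (\<integral>\<omega>. (U x \<omega>)\<^sup>2 \<partial>M)) \<and>
     (\<forall>f. sq_int M f \<longrightarrow> (\<exists>x. AE \<omega> in M. U x \<omega> = f \<omega>)) \<and>
     (\<forall>u. u \<in> D \<longleftrightarrow> sq_int M (\<lambda>\<omega>. lam \<omega> * U u \<omega>)) \<and>
     (\<forall>u\<in>D. AE \<omega> in M. U (B u) \<omega> = lam \<omega> * U u \<omega>)"

text \<open>Hilbert scale norm \<parallel>u\<parallel>_tau = \<parallel>B^tau u\<parallel> via the functional calculus (used for tau \<le> 0).\<close>
definition hs_norm :: "'w measure \<Rightarrow> ('w \<Rightarrow> real) \<Rightarrow> ('a \<Rightarrow> 'w \<Rightarrow> real) \<Rightarrow> real \<Rightarrow> 'a \<Rightarrow> real" where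
  "hs_norm M lam U tau u = sqrt (\<integral>\<omega>. (\<bar>lam \<omega>\<bar> powr tau * U u \<omega>)\<^sup>2 \<partial>M)"

text \<open>Operator norm of G = B^(-(2a+2)).\<close>
definition G_norm :: "'w measure \<Rightarrow> ('w \<Rightarrow> real) \<Rightarrow> ('a::real_normed_vector \<Rightarrow> 'w \<Rightarrow> real) \<Rightarrow> real \<Rightarrow> real" where
  "G_norm M lam U a = Sup {hs_norm M lam U (-(2*a+2)) u | u. norm u \<le> 1}"

definition phi_log :: "real \<Rightarrow> real \<Rightarrow> real \<Rightarrow> real" where
  "phi_log c \<kappa> t = (- ln (c * t)) powr (- \<kappa>)"

text \<open>Tikhonov functional T_alpha^delta(u) for u \<in> X_1 (it is +\<infinity> outside X_1).\<close>
definition tik :: "('a \<Rightarrow> 'a::real_normed_vector) \<Rightarrow> ('a \<Rightarrow> 'b::real_normed_vector) \<Rightarrow> 'b \<Rightarrow> 'a \<Rightarrow> real \<Rightarrow> 'a \<Rightarrow> real" where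
  "tik B F fd ubar \<alpha> u = (norm (F u - fd))\<^sup>2 + \<alpha> * (norm (B (u - ubar)))\<^sup>2"

definition is_tik_min :: "'a set \<Rightarrow> 'a set \<Rightarrow> ('a \<Rightarrow> 'a::real_normed_vector) \<Rightarrow> ('a \<Rightarrow> 'b::real_normed_vector) \<Rightarrow> 'b \<Rightarrow> 'a \<Rightarrow> real \<Rightarrow> 'a \<Rightarrow> bool" where
  "is_tik_min DF DB B F fd ubar \<alpha> u \<longleftrightarrow>
     u \<in> DF \<inter> DB \<and> (\<forall>v \<in> DF \<inter> DB. tik B F fd ubar \<alpha> u \<le> tik B F fd ubar \<alpha> v)"

definition dp_case_b :: "'a set \<Rightarrow> 'a set \<Rightarrow> ('a \<Rightarrow> 'a::real_normed_vector) \<Rightarrow> ('a \<Rightarrow> 'b::real_normed_vector) \<Rightarrow> 'b \<Rightarrow> 'a \<Rightarrow> real \<Rightarrow> real \<Rightarrow> real \<Rightarrow> real \<Rightarrow> bool" where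
  "dp_case_b DF DB B F fd ubar k l \<delta> \<alpha> \<longleftrightarrow>
     0 < \<alpha> \<and>
     (\<exists>u. is_tik_min DF DB B F fd ubar \<alpha> u \<and> norm (F u - fd) \<le> k * \<delta>) \<and>
     (\<exists>\<gamma>\<in>{\<alpha>..l*\<alpha>}. \<exists>v. is_tik_min DF DB B F fd ubar \<gamma> v \<and> k * \<delta> \<le> norm (F v - fd))"

end

theory Submission imports Defs "HOL-Real_Asymp.Real_Asymp" begin

lemma ev_lin_log:
  fixes A B C0 T :: real
  assumes "A > 0"
  shows "eventually (\<lambda>x. T \<le> A*x - B * ln x + C0) at_top"
proof -
  have "filterlim (\<lambda>x::real. A*x - B * ln x + C0) at_top at_top"
    using assms by real_asymp
  thus ?thesis by (simp add: filterlim_at_top)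
qed

lemma ev_powr_small:
  fixes k e :: real
  assumes "k > 0" "e > 0"
  shows "eventually (\<lambda>x. x powr (-k) < e) at_top"
proof -
  have "((\<lambda>x::real. x powr (-k)) \<longlongrightarrow> 0) at_top" using assms by real_asymp
  from order_tendstoD(2)[OF this assms(2)] show ?thesis .
qed

lemma mono_aux:
  fixes p c \<kappa> R0 x R :: real
  assumes p: "p > 0" and k: "\<kappa> > 0" and c: "c > 0"
    and LR0: "p * ln R0 - ln c \<ge> p * \<kappa>" and R0: "R0 > 0"
    and x: "R0 < x" "x \<le> R"
  shows "x * (p * ln x - ln c) powr (-\<kappa>) \<le> R * (p * ln R - ln c) powr (-\<kappa>)"
proof -
  have xp: "x > 0" using x R0 by simp
  have Rp: "R > 0" using x xp by simp
  have "ln R0 < ln x" using x R0 by simp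
  hence Lx: "p * ln x - ln c \<ge> p * \<kappa>" using LR0 p by (smt (verit) mult_strict_left_mono)
  have "ln x \<le> ln R" using x xp by simp
  hence LR: "p * ln R - ln c \<ge> p * ln x - ln c" using p by (simp add: mult_left_mono)
  define Lx' where "Lx' = p * ln x - ln c"
  define LR' where "LR' = p * ln R - ln c"
  have Lxp: "Lx' > 0" using Lx p k unfolding Lx'_def by (smt (verit) mult_pos_pos)
  have LRp: "LR' > 0" using LR Lxp unfolding Lx'_def LR'_def by simp
  have "ln (LR' / Lx') \<le> LR' / Lx' - 1" using LRp Lxp by (intro ln_le_minus_one) simp
  also have "\<dots> = p * (ln R - ln x) / Lx'" using Lxp unfolding LR'_def Lx'_def
    by (simp add: field_simps)
  also have "\<dots> \<le> p * (ln R - ln x) / (p * \<kappa>)"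
    using Lx Lxp p k \<open>ln x \<le> ln R\<close> unfolding Lx'_def
    by (intro divide_left_mono) (auto intro: mult_pos_pos)
  also have "\<dots> = (ln R - ln x) / \<kappa>" using p by simp
  finally have "\<kappa> * ln (LR' / Lx') \<le> ln R - ln x" using k by (simp add: field_simps)
  hence "\<kappa> * (ln LR' - ln Lx') \<le> ln R - ln x" using LRp Lxp by (simp add: ln_div)
  hence "ln x + (-\<kappa>) * ln Lx' \<le> ln R + (-\<kappa>) * ln LR'" by (simp add: algebra_simps)
  hence "exp (ln x + (-\<kappa>) * ln Lx') \<le> exp (ln R + (-\<kappa>) * ln LR')" by simp
  also have "exp (ln R + (-\<kappa>) * ln LR') = R * LR' powr (-\<kappa>)"
    using Rp LRp by (simp add: exp_diff exp_minus powr_def field_simps)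
  also have "exp (ln x + (-\<kappa>) * ln Lx') = x * Lx' powr (-\<kappa>)"
    using xp Lxp by (simp add: exp_diff exp_minus powr_def field_simps)
  finally show ?thesis unfolding Lx'_def LR'_def .
qed

lemma mono_aux2:
  fixes p c \<kappa> x R :: real
  assumes p: "p > 0" and k: "\<kappa> > 0" and LR: "p * ln R - ln c > 0" and R: "R > 0" and x: "R \<le> x"
  shows "(p * ln x - ln c) powr (-\<kappa>) \<le> (p * ln R - ln c) powr (-\<kappa>)"
proof -
  have "ln R \<le> ln x" using x R by simp
  hence "p * ln R - ln c \<le> p * ln x - ln c" using p by (simp add: mult_left_mono)
  thus ?thesis using LR k by (intro powr_mono2') auto
qed


lemma phi_rewrite:
  assumes "x > 0" "c > 0"
  shows "phi_log c \<kappa> (x powr (-p)) = (p * ln x - ln c) powr (-\<kappa>)"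
  using assms by (simp add: phi_log_def ln_mult ln_powr)

lemma U_diff:
  assumes "spectral_rep M lam U D B"
  shows "U (x - y) \<omega> = U x \<omega> - U y \<omega>"
proof -
  have add: "\<And>x y \<omega>. U (x + y) \<omega> = U x \<omega> + U y \<omega>" and sc: "\<And>c x \<omega>. U (c *\<^sub>R x) \<omega> = c * U x \<omega>"
    using assms unfolding spectral_rep_def by auto
  have "U (x - y) \<omega> = U (x + (-1) *\<^sub>R y) \<omega>" by simp
  also have "\<dots> = U x \<omega> - U y \<omega>" by (simp only: add sc)
  finally show ?thesis .
qed

lemma core:
  fixes U :: "'x::real_inner \<Rightarrow> 'w \<Rightarrow> real"
  assumes spec: "spectral_rep M lam U D B" and sub: "subspace D" and ubar: "ubar \<in> D"
    and source: "AE \<omega> in M. U (udag - ubar) \<omega> =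
                   phi_log c \<kappa> (\<bar>lam \<omega>\<bar> powr (-p)) * U w \<omega>"
    and p: "p > 0" and k: "\<kappa> > 0" and c: "c > 0" and a: "a > 0"
    and R0: "R0 > 0" "p * ln R0 - ln c \<ge> p * \<kappa>"
    and R: "R > 0" "p * ln R - ln c > 0"
  shows "\<exists>v. v \<in> D \<and> norm (v - udag) \<le> (p * ln R - ln c) powr (-\<kappa>) * norm w
     \<and> hs_norm M lam U (-a) (v - udag) \<le> R powr (-a) * (p * ln R - ln c) powr (-\<kappa>) * norm w
     \<and> (norm (B (v - ubar)))\<^sup>2 \<le> R0\<^sup>2 * (norm (udag - ubar))\<^sup>2 + (R * (p * ln R - ln c) powr (-\<kappa>))\<^sup>2 * (norm w)\<^sup>2"
proof -
  define e where "e = udag - ubar"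
  define \<psi> where "\<psi> = (p * ln R - ln c) powr (-\<kappa>)"
  have psi0: "\<psi> \<ge> 0" unfolding \<psi>_def by simp
  have lam_m: "lam \<in> borel_measurable M" and sqi: "\<And>x. sq_int M (U x)"
    and nrm: "\<And>x. (norm x)\<^sup>2 = (\<integral>\<omega>. (U x \<omega>)\<^sup>2 \<partial>M)"
    and surj: "\<And>f. sq_int M f \<Longrightarrow> (\<exists>x. AE \<omega> in M. U x \<omega> = f \<omega>)"
    and dom: "\<And>u. u \<in> D \<longleftrightarrow> sq_int M (\<lambda>\<omega>. lam \<omega> * U u \<omega>)"
    and BU: "\<And>u. u \<in> D \<Longrightarrow> AE \<omega> in M. U (B u) \<omega> = lam \<omega> * U u \<omega>"
    using spec unfolding spectral_rep_def by auto
  have Um: "\<And>x. U x \<in> borel_measurable M" and Ui: "\<And>x. integrable M (\<lambda>\<omega>. (U x \<omega>)\<^sup>2)"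
    using sqi unfolding sq_int_def by auto
  define f where "f = (\<lambda>\<omega>. if \<bar>lam \<omega>\<bar> \<le> R then U e \<omega> else 0)"
  have fm: "f \<in> borel_measurable M" unfolding f_def using lam_m Um by measurable
  have "sq_int M f" unfolding sq_int_def
  proof
    show "f \<in> borel_measurable M" by (rule fm)
    show "integrable M (\<lambda>\<omega>. (f \<omega>)\<^sup>2)"
      by (rule Bochner_Integration.integrable_bound[OF Ui[of e]]) (use fm in \<open>auto simp: f_def\<close>)
  qed
  then obtain z where z: "AE \<omega> in M. U z \<omega> = f \<omega>" using surj by blast
  have zD: "z \<in> D" unfolding dom sq_int_def
  proof
    show "(\<lambda>\<omega>. lam \<omega> * U z \<omega>) \<in> borel_measurable M" using lam_m Um by measurable
    show "integrable M (\<lambda>\<omega>. (lam \<omega> * U z \<omega>)\<^sup>2)"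
    proof (rule Bochner_Integration.integrable_bound[OF integrable_mult_right[OF Ui[of e], of "R\<^sup>2"]])
      show "(\<lambda>\<omega>. (lam \<omega> * U z \<omega>)\<^sup>2) \<in> borel_measurable M" using lam_m Um by measurable
      show "AE \<omega> in M. norm ((lam \<omega> * U z \<omega>)\<^sup>2) \<le> norm (R\<^sup>2 * (U e \<omega>)\<^sup>2)"
        using z
      proof eventually_elim
        case (elim \<omega>)
        show ?case
        proof (cases "\<bar>lam \<omega>\<bar> \<le> R")
          case True
          hence "(lam \<omega>)\<^sup>2 \<le> R\<^sup>2" using R(1) abs_le_square_iff[of "lam \<omega>" R] by simp
          hence "(lam \<omega>)\<^sup>2 * (U e \<omega>)\<^sup>2 \<le> R\<^sup>2 * (U e \<omega>)\<^sup>2" by (simp add: mult_right_mono)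
          thus ?thesis using elim True by (simp add: f_def power_mult_distrib)
        qed (use elim in \<open>simp add: f_def\<close>)
      qed
    qed
  qed
  define v where "v = ubar + z"
  have vD: "v \<in> D" unfolding v_def using sub ubar zD by (simp add: subspace_add)
  have vu: "v - udag = z - e" unfolding v_def e_def by (simp add: algebra_simps)
  have vb: "v - ubar = z" unfolding v_def by simp
  have src: "AE \<omega> in M. U e \<omega> = phi_log c \<kappa> (\<bar>lam \<omega>\<bar> powr (-p)) * U w \<omega>"
    using source unfolding e_def .
  have big: "phi_log c \<kappa> (\<bar>x\<bar> powr (-p)) \<le> \<psi>" if "\<not> \<bar>x\<bar> \<le> R" for x
  proof -
    have "\<bar>x\<bar> > 0" using that R by simp
    hence "phi_log c \<kappa> (\<bar>x\<bar> powr (-p)) = (p * ln \<bar>x\<bar> - ln c) powr (-\<kappa>)"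
      using c by (rule phi_rewrite)
    also have "\<dots> \<le> \<psi>" unfolding \<psi>_def using mono_aux2[OF p k R(2) R(1), of "\<bar>x\<bar>"] that by simp
    finally show ?thesis .
  qed
  have phi0: "phi_log c \<kappa> t \<ge> 0" for t unfolding phi_log_def by simp
  have "(norm (v - udag))\<^sup>2 \<le> \<psi>\<^sup>2 * (norm w)\<^sup>2"
  proof -
    have "(norm (v - udag))\<^sup>2 = (\<integral>\<omega>. (U (z - e) \<omega>)\<^sup>2 \<partial>M)" using nrm vu by simp
    also have "\<dots> \<le> (\<integral>\<omega>. \<psi>\<^sup>2 * (U w \<omega>)\<^sup>2 \<partial>M)"
    proof (rule integral_mono_AE')
      show "integrable M (\<lambda>\<omega>. \<psi>\<^sup>2 * (U w \<omega>)\<^sup>2)" using Ui by simp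
      show "AE \<omega> in M. 0 \<le> \<psi>\<^sup>2 * (U w \<omega>)\<^sup>2" by simp
      show "AE \<omega> in M. (U (z - e) \<omega>)\<^sup>2 \<le> \<psi>\<^sup>2 * (U w \<omega>)\<^sup>2"
        using z src
      proof eventually_elim
        case (elim \<omega>)
        show ?case
        proof (cases "\<bar>lam \<omega>\<bar> \<le> R")
          case False
          have "(phi_log c \<kappa> (\<bar>lam \<omega>\<bar> powr (-p)))\<^sup>2 \<le> \<psi>\<^sup>2"
            using big[OF False] phi0 by (simp add: power_mono)
          hence "(phi_log c \<kappa> (\<bar>lam \<omega>\<bar> powr (-p)))\<^sup>2 * (U w \<omega>)\<^sup>2 \<le> \<psi>\<^sup>2 * (U w \<omega>)\<^sup>2"
            by (simp add: mult_right_mono)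
          thus ?thesis using elim False U_diff[OF spec] by (simp add: f_def power_mult_distrib)
        qed (use elim U_diff[OF spec] in \<open>simp add: f_def\<close>)
      qed
    qed
    also have "\<dots> = \<psi>\<^sup>2 * (norm w)\<^sup>2" using nrm by simp
    finally show ?thesis .
  qed
  hence n1: "norm (v - udag) \<le> \<psi> * norm w"
    using psi0 by (simp add: power_mult_distrib[symmetric] power2_le_iff_abs_le)
  have "(hs_norm M lam U (-a) (v - udag))\<^sup>2 \<le> (R powr (-a) * \<psi>)\<^sup>2 * (norm w)\<^sup>2"
  proof -
    have "(hs_norm M lam U (-a) (v - udag))\<^sup>2 \<le> (\<integral>\<omega>. (R powr (-a) * \<psi>)\<^sup>2 * (U w \<omega>)\<^sup>2 \<partial>M)"
      unfolding hs_norm_def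
    proof (subst real_sqrt_pow2)
      show "0 \<le> (\<integral>\<omega>. (\<bar>lam \<omega>\<bar> powr - a * U (v - udag) \<omega>)\<^sup>2 \<partial>M)" by simp
      show "(\<integral>\<omega>. (\<bar>lam \<omega>\<bar> powr - a * U (v - udag) \<omega>)\<^sup>2 \<partial>M) \<le> (\<integral>\<omega>. (R powr (-a) * \<psi>)\<^sup>2 * (U w \<omega>)\<^sup>2 \<partial>M)"
      proof (rule integral_mono_AE')
        show "integrable M (\<lambda>\<omega>. (R powr (-a) * \<psi>)\<^sup>2 * (U w \<omega>)\<^sup>2)" using Ui by simp
        show "AE \<omega> in M. 0 \<le> (R powr (-a) * \<psi>)\<^sup>2 * (U w \<omega>)\<^sup>2" by simp
        show "AE \<omega> in M. (\<bar>lam \<omega>\<bar> powr - a * U (v - udag) \<omega>)\<^sup>2 \<le> (R powr (-a) * \<psi>)\<^sup>2 * (U w \<omega>)\<^sup>2"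
          using z src
        proof eventually_elim
          case (elim \<omega>)
          show ?case
          proof (cases "\<bar>lam \<omega>\<bar> \<le> R")
            case False
            have "\<bar>lam \<omega>\<bar> powr - a \<le> R powr (-a)" using False R a by (intro powr_mono2') auto
            hence "\<bar>lam \<omega>\<bar> powr - a * phi_log c \<kappa> (\<bar>lam \<omega>\<bar> powr (-p)) \<le> R powr (-a) * \<psi>"
              using big[OF False] phi0 by (intro mult_mono) auto
            hence "(\<bar>lam \<omega>\<bar> powr - a * phi_log c \<kappa> (\<bar>lam \<omega>\<bar> powr (-p)))\<^sup>2 \<le> (R powr (-a) * \<psi>)\<^sup>2"
              using phi0 by (intro power_mono) auto
            hence "(\<bar>lam \<omega>\<bar> powr - a * phi_log c \<kappa> (\<bar>lam \<omega>\<bar> powr (-p)))\<^sup>2 * (U w \<omega>)\<^sup>2 \<le> (R powr (-a) * \<psi>)\<^sup>2 * (U w \<omega>)\<^sup>2"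
              by (simp add: mult_right_mono)
            thus ?thesis using elim False U_diff[OF spec] vu by (simp add: f_def power_mult_distrib)
          qed (use elim U_diff[OF spec] vu in \<open>simp add: f_def\<close>)
        qed
      qed
    qed
    also have "\<dots> = (R powr (-a) * \<psi>)\<^sup>2 * (norm w)\<^sup>2" using nrm by simp
    finally show ?thesis .
  qed
  hence n2: "hs_norm M lam U (-a) (v - udag) \<le> R powr (-a) * \<psi> * norm w"
    using psi0 by (simp add: power_mult_distrib[symmetric] power2_le_iff_abs_le)
  have n3: "(norm (B (v - ubar)))\<^sup>2 \<le> R0\<^sup>2 * (norm e)\<^sup>2 + (R * \<psi>)\<^sup>2 * (norm w)\<^sup>2"
  proof -
    have "(norm (B (v - ubar)))\<^sup>2 = (\<integral>\<omega>. (U (B z) \<omega>)\<^sup>2 \<partial>M)" using nrm vb by simp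
    also have "\<dots> \<le> (\<integral>\<omega>. R0\<^sup>2 * (U e \<omega>)\<^sup>2 + (R * \<psi>)\<^sup>2 * (U w \<omega>)\<^sup>2 \<partial>M)"
    proof (rule integral_mono_AE')
      show "integrable M (\<lambda>\<omega>. R0\<^sup>2 * (U e \<omega>)\<^sup>2 + (R * \<psi>)\<^sup>2 * (U w \<omega>)\<^sup>2)" using Ui by simp
      show "AE \<omega> in M. 0 \<le> R0\<^sup>2 * (U e \<omega>)\<^sup>2 + (R * \<psi>)\<^sup>2 * (U w \<omega>)\<^sup>2" by simp
      show "AE \<omega> in M. (U (B z) \<omega>)\<^sup>2 \<le> R0\<^sup>2 * (U e \<omega>)\<^sup>2 + (R * \<psi>)\<^sup>2 * (U w \<omega>)\<^sup>2"
        using z src BU[OF zD]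
      proof eventually_elim
        case (elim \<omega>)
        have ub: "(U (B z) \<omega>)\<^sup>2 = (if \<bar>lam \<omega>\<bar> \<le> R then (lam \<omega>)\<^sup>2 * (U e \<omega>)\<^sup>2 else 0)"
          using elim by (simp add: f_def power_mult_distrib)
        show ?case
        proof (cases "\<bar>lam \<omega>\<bar> \<le> R0")
          case True
          hence "(lam \<omega>)\<^sup>2 \<le> R0\<^sup>2" using R0(1) abs_le_square_iff[of "lam \<omega>" R0] by simp
          hence "(lam \<omega>)\<^sup>2 * (U e \<omega>)\<^sup>2 \<le> R0\<^sup>2 * (U e \<omega>)\<^sup>2" by (simp add: mult_right_mono)
          moreover have "0 \<le> (R * \<psi>)\<^sup>2 * (U w \<omega>)\<^sup>2" by simp
          ultimately show ?thesis unfolding ub by (auto intro: add_increasing2)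
        next
          case F0: False
          show ?thesis
          proof (cases "\<bar>lam \<omega>\<bar> \<le> R")
            case True
            have pos: "\<bar>lam \<omega>\<bar> > 0" using F0 R0 by simp
            have "\<bar>lam \<omega>\<bar> * phi_log c \<kappa> (\<bar>lam \<omega>\<bar> powr (-p)) \<le> R * \<psi>"
              unfolding phi_rewrite[OF pos c] \<psi>_def
              using mono_aux[OF p k c R0(2) R0(1), of "\<bar>lam \<omega>\<bar>" R] F0 True by simp
            hence "(\<bar>lam \<omega>\<bar> * phi_log c \<kappa> (\<bar>lam \<omega>\<bar> powr (-p)))\<^sup>2 \<le> (R * \<psi>)\<^sup>2"
              using phi0 by (intro power_mono) auto
            hence "(\<bar>lam \<omega>\<bar> * phi_log c \<kappa> (\<bar>lam \<omega>\<bar> powr (-p)))\<^sup>2 * (U w \<omega>)\<^sup>2 \<le> (R * \<psi>)\<^sup>2 * (U w \<omega>)\<^sup>2"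
              by (simp add: mult_right_mono)
            moreover have "0 \<le> R0\<^sup>2 * (U e \<omega>)\<^sup>2" by simp
            ultimately show ?thesis unfolding ub using True elim(2)
              by (simp add: power_mult_distrib mult.assoc add_increasing)
          qed (simp add: ub)
        qed
      qed
    qed
    also have "\<dots> = R0\<^sup>2 * (norm e)\<^sup>2 + (R * \<psi>)\<^sup>2 * (norm w)\<^sup>2"
      using Ui nrm by (simp add: Bochner_Integration.integral_add)
    finally show ?thesis .
  qed
  show ?thesis using vD n1 n2 n3 unfolding \<psi>_def e_def by blast
qed

theorem lemma4p4:
  fixes B :: "'x::{real_inner,complete_space} \<Rightarrow> 'x" and DB :: "'x set" and m :: real
    and M :: "'w measure" and lam :: "'w \<Rightarrow> real" and U :: "'x \<Rightarrow> 'w \<Rightarrow> real"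
    and F :: "'x \<Rightarrow> 'y::{real_inner,complete_space}" and DF :: "'x set"
    and udag ubar w :: 'x and fdag :: 'y
    and a \<kappa> c \<rho> k l :: real
  assumes infX: "infinite_dim (UNIV :: 'x set)"
    and infY: "infinite_dim (UNIV :: 'y set)"
    and B_sa: "selfadjoint_op DB B"
    and B_unb: "unbounded_op DB B"
    and m_pos: "m > 0"
    and B_bd: "\<forall>u\<in>DB. norm (B u) \<ge> m * norm u"
    and spec: "spectral_rep M lam U DB B"
    and A_a: "weakly_seq_cont_on DF F"
    and A_b: "closed DF" "convex DF"
    and A_c: "DF \<inter> DB \<noteq> {}" "ubar \<in> DF \<inter> DB"
    and A_d: "udag \<in> interior DF"
    and fdag: "F udag = fdag"
    and a_pos: "a > 0"
    and A_f: "\<exists>ca Ca. 0 < ca \<and> ca \<le> Ca \<and>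
               (\<forall>u\<in>DF \<inter> DB. ca * hs_norm M lam U (-a) (u - udag) \<le> norm (F u - fdag) \<and>
                              norm (F u - fdag) \<le> Ca * hs_norm M lam U (-a) (u - udag))"
    and kappa_pos: "\<kappa> > 0"
    and c_rng: "0 < c" "c < 1 / G_norm M lam U a"
    and rho_pos: "\<rho> > 0"
    and w_bd: "norm w \<le> \<rho>"
    and source: "AE \<omega> in M. U (udag - ubar) \<omega> =
                   phi_log c \<kappa> (\<bar>lam \<omega>\<bar> powr (-(2*a+2))) * U w \<omega>"
    and k_gt: "k > 1" and l_gt: "l > 1"
  shows "\<exists>C \<delta>0. C > 0 \<and> \<delta>0 > 0 \<and>
           (\<forall>\<delta> fd \<alpha>. 0 < \<delta> \<longrightarrow> \<delta> \<le> \<delta>0 \<longrightarrow> norm (fd - fdag) \<le> \<delta> \<longrightarrow>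
              norm (F ubar - fd) > k * \<delta> \<longrightarrow>
              dp_case_b DF DB B F fd ubar k l \<delta> \<alpha> \<longrightarrow>
              \<alpha> \<ge> C * \<delta> powr ((2*a+2)/a) * (- ln (c * \<delta>)) powr (\<kappa> * ((2*a+2)/a)))"
proof -
  define p where "p = 2*a+2"
  have p_pos: "p > 0" using a_pos by (simp add: p_def)
  obtain ca Ca where caCa: "0 < ca" "ca \<le> Ca" and Af: "\<forall>u\<in>DF \<inter> DB. ca * hs_norm M lam U (-a) (u - udag) \<le> norm (F u - fdag) \<and>
                              norm (F u - fdag) \<le> Ca * hs_norm M lam U (-a) (u - udag)"
    using A_f by blast
  have Ca_pos: "Ca > 0" using caCa by simp
  have Af2: "\<And>u. u \<in> DF \<Longrightarrow> u \<in> DB \<Longrightarrow> norm (F u - fdag) \<le> Ca * hs_norm M lam U (-a) (u - udag)"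
    using Af by blast
  obtain eb where eb: "eb > 0" "ball udag eb \<subseteq> DF" using A_d mem_interior by blast
  have sub: "subspace DB" using B_sa unfolding selfadjoint_op_def by blast
  have ubarD: "ubar \<in> DB" "ubar \<in> DF" using A_c by auto
  have c_pos: "c > 0" using c_rng by simp
  define E where "E = norm (udag - ubar)"
  define R0 where "R0 = exp ((p*\<kappa> + ln c)/p)"
  have R0_pos: "R0 > 0" by (simp add: R0_def)
  have LR0: "p * ln R0 - ln c \<ge> p*\<kappa>" using p_pos by (simp add: R0_def)
  define \<epsilon> where "\<epsilon> = (k-1)/2"
  define \<eta> where "\<eta> = k^2 - (1+\<epsilon>)^2"
  have eps_pos: "\<epsilon> > 0" using k_gt by (simp add: \<epsilon>_def)
  have "1 + \<epsilon> < k" using k_gt by (simp add: \<epsilon>_def field_simps)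
  hence "(1+\<epsilon>)^2 < k^2" using eps_pos by (intro power_strict_mono) auto
  hence eta_pos: "\<eta> > 0" by (simp add: \<eta>_def)
  define K where "K = Ca*\<rho>/\<epsilon>"
  have K_pos: "K > 0" using Ca_pos rho_pos eps_pos by (simp add: K_def)
  define r where "r = (2*a+2)/a"
  define Rf where "Rf = (\<lambda>\<Lambda>. exp ((ln (K*c) + \<Lambda> - \<kappa> * ln \<Lambda>)/a))"
  define Wf where "Wf = (\<lambda>\<Lambda>. (Rf \<Lambda>)^2 * (\<Lambda> powr (-\<kappa>))^2)"
  define Q where "Q = c^2 * exp (2 * ln (K*c)/a - r * ln c)"
  have Q_pos: "Q > 0" using c_pos by (simp add: Q_def)
  define C where "C = \<eta> / (2*l*\<rho>^2*Q)"
  have C_pos: "C > 0" using eta_pos l_gt rho_pos Q_pos by (simp add: C_def)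
  have ev1: "eventually (\<lambda>\<Lambda>::real. 1 \<le> \<Lambda>) at_top" by (rule eventually_ge_at_top)
  have ev2: "eventually (\<lambda>\<Lambda>. \<Lambda> \<le> p * ln (Rf \<Lambda>) - ln c) at_top"
  proof -
    have "p/a - 1 > 0" using a_pos by (simp add: p_def field_simps)
    from ev_lin_log[OF this, of 0 "p*\<kappa>/a" "p/a * ln (K*c) - ln c"]
    show ?thesis
    proof eventually_elim
      case (elim \<Lambda>)
      have "p * ln (Rf \<Lambda>) - ln c = p/a * (ln (K*c) + \<Lambda> - \<kappa> * ln \<Lambda>) - ln c"
        by (simp add: Rf_def)
      also have "\<dots> = (p/a - 1) * \<Lambda> - p*\<kappa>/a * ln \<Lambda> + (p/a * ln (K*c) - ln c) + \<Lambda>"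
        using a_pos by (simp add: field_simps)
      finally show ?case using elim by simp
    qed
  qed
  have ev3: "eventually (\<lambda>\<Lambda>. \<Lambda> powr (-\<kappa>) * \<rho> < eb) at_top"
  proof -
    have "eb/\<rho> > 0" using eb rho_pos by simp
    from ev_powr_small[OF kappa_pos this]
    show ?thesis by eventually_elim (use rho_pos in \<open>simp add: field_simps\<close>)
  qed
  have ev4: "eventually (\<lambda>\<Lambda>. R0^2 * E^2 \<le> \<rho>^2 * Wf \<Lambda>) at_top"
  proof -
    have "2/a > 0" using a_pos by simp
    from ev_lin_log[OF this, of "ln (R0^2 * E^2 / \<rho>^2 + 1)" "2*\<kappa>/a + 2*\<kappa>" "2 * ln (K*c)/a"] ev1
    show ?thesis
    proof eventually_elim
      case (elim \<Lambda>)
      have Lp: "\<Lambda> > 0" using elim(2) by simp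
      have sq: "\<And>x::real. (exp x)^2 = exp (2*x)" by (metis exp_add mult_2 power2_eq_square)
      have arg: "2 * ((ln (K*c) + \<Lambda> - \<kappa> * ln \<Lambda>)/a) + 2 * (-\<kappa> * ln \<Lambda>)
           = 2/a * \<Lambda> - (2*\<kappa>/a + 2*\<kappa>) * ln \<Lambda> + 2 * ln (K*c)/a"
        using a_pos by (simp add: field_simps)
      have "Wf \<Lambda> = (exp ((ln (K*c) + \<Lambda> - \<kappa> * ln \<Lambda>)/a))^2 * (exp (-\<kappa> * ln \<Lambda>))^2"
        using Lp unfolding Wf_def Rf_def by (simp add: powr_def)
      also have "\<dots> = exp (2/a * \<Lambda> - (2*\<kappa>/a + 2*\<kappa>) * ln \<Lambda> + 2 * ln (K*c)/a)"
        unfolding sq exp_add[symmetric] arg ..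
      finally have Weq: "Wf \<Lambda> = exp (2/a * \<Lambda> - (2*\<kappa>/a + 2*\<kappa>) * ln \<Lambda> + 2 * ln (K*c)/a)" .
      have X0: "0 \<le> R0^2 * E^2 / \<rho>^2" by simp
      have "R0^2 * E^2 / \<rho>^2 + 1 = exp (ln (R0^2 * E^2 / \<rho>^2 + 1))"
        by (rule exp_ln[symmetric]) (use X0 in linarith)
      also have "\<dots> \<le> exp (2/a * \<Lambda> - (2*\<kappa>/a + 2*\<kappa>) * ln \<Lambda> + 2 * ln (K*c)/a)"
        using elim(1) by (simp only: exp_le_cancel_iff)
      finally have "R0^2 * E^2 / \<rho>^2 + 1 \<le> Wf \<Lambda>" unfolding Weq .
      hence "R0^2 * E^2 / \<rho>^2 \<le> Wf \<Lambda>" by simp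
      thus ?case using rho_pos by (simp add: field_simps)
    qed
  qed
  have "eventually (\<lambda>\<Lambda>. 1 \<le> \<Lambda> \<and> \<Lambda> \<le> p * ln (Rf \<Lambda>) - ln c \<and> \<Lambda> powr (-\<kappa>) * \<rho> < eb
          \<and> R0^2 * E^2 \<le> \<rho>^2 * Wf \<Lambda>) at_top"
    using ev1 ev2 ev3 ev4 by eventually_elim blast
  then obtain \<Lambda>0 where L0: "\<And>\<Lambda>. \<Lambda> \<ge> \<Lambda>0 \<Longrightarrow> 1 \<le> \<Lambda> \<and> \<Lambda> \<le> p * ln (Rf \<Lambda>) - ln c \<and> \<Lambda> powr (-\<kappa>) * \<rho> < eb
          \<and> R0^2 * E^2 \<le> \<rho>^2 * Wf \<Lambda>"
    unfolding eventually_at_top_linorder by blast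
  define \<delta>0 where "\<delta>0 = exp (-\<Lambda>0) / c"
  have d0_pos: "\<delta>0 > 0" using c_pos by (simp add: \<delta>0_def)
  show ?thesis
  proof (intro exI conjI allI impI)
    show "C > 0" by (rule C_pos)
    show "\<delta>0 > 0" by (rule d0_pos)
    fix \<delta> fd \<alpha>
    assume d_pos: "0 < \<delta>" and d_le: "\<delta> \<le> \<delta>0" and fd_bd: "norm (fd - fdag) \<le> \<delta>"
      and "norm (F ubar - fd) > k * \<delta>" and dp: "dp_case_b DF DB B F fd ubar k l \<delta> \<alpha>"
    define \<Lambda> where "\<Lambda> = - ln (c * \<delta>)"
    have "c * \<delta> \<le> exp (-\<Lambda>0)" using d_le c_pos by (simp add: \<delta>0_def field_simps)
    hence "ln (c * \<delta>) \<le> ln (exp (-\<Lambda>0))" using c_pos d_pos by (intro ln_mono) auto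
    hence "ln (c * \<delta>) \<le> -\<Lambda>0" by simp
    hence "\<Lambda> \<ge> \<Lambda>0" by (simp add: \<Lambda>_def)
    from L0[OF this] have L1: "1 \<le> \<Lambda>" and L2: "\<Lambda> \<le> p * ln (Rf \<Lambda>) - ln c"
      and L3: "\<Lambda> powr (-\<kappa>) * \<rho> < eb" and L4: "R0^2 * E^2 \<le> \<rho>^2 * Wf \<Lambda>" by auto
    have expL: "exp (-\<Lambda>) = c * \<delta>" using c_pos d_pos by (simp add: \<Lambda>_def)
    have ln_d: "ln \<delta> = -\<Lambda> - ln c" using c_pos d_pos by (simp add: \<Lambda>_def ln_mult)
    define R where "R = Rf \<Lambda>"
    have R_pos: "R > 0" by (simp add: R_def Rf_def)
    have lnR: "ln R = (ln (K*c) + \<Lambda> - \<kappa> * ln \<Lambda>)/a" by (simp add: R_def Rf_def)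
    have LR_pos: "p * ln R - ln c > 0" using L1 L2 by (simp add: R_def)
    define \<psi> where "\<psi> = (p * ln R - ln c) powr (-\<kappa>)"
    have psi_le: "\<psi> \<le> \<Lambda> powr (-\<kappa>)" unfolding \<psi>_def
      using L1 L2 kappa_pos by (intro powr_mono2') (auto simp: R_def)
    have psi0: "\<psi> \<ge> 0" by (simp add: \<psi>_def)
    obtain v where vD: "v \<in> DB" and n1: "norm (v - udag) \<le> \<psi> * norm w"
      and n2: "hs_norm M lam U (-a) (v - udag) \<le> R powr (-a) * \<psi> * norm w"
      and n3: "(norm (B (v - ubar)))\<^sup>2 \<le> R0\<^sup>2 * E\<^sup>2 + (R * \<psi>)\<^sup>2 * (norm w)\<^sup>2"
      using core[OF spec sub ubarD(1) source[folded p_def] p_pos kappa_pos c_pos a_pos R0_pos LR0 R_pos LR_pos]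
      unfolding \<psi>_def[symmetric] E_def[symmetric] by blast
    have "norm (v - udag) < eb"
    proof -
      have "\<psi> * norm w \<le> \<Lambda> powr (-\<kappa>) * \<rho>" using psi_le psi0 w_bd by (intro mult_mono) auto
      thus ?thesis using n1 L3 by linarith
    qed
    hence vF: "v \<in> DF" using eb by (auto simp: dist_norm norm_minus_commute)
    obtain \<gamma> u where g: "\<alpha> \<le> \<gamma>" "\<gamma> \<le> l * \<alpha>" and umin: "is_tik_min DF DB B F fd ubar \<gamma> u"
      and ku: "k * \<delta> \<le> norm (F u - fd)" and a_p: "\<alpha> > 0"
      using dp unfolding dp_case_b_def by auto
    have g_pos: "\<gamma> > 0" using g a_p by simp
    have tik_le: "tik B F fd ubar \<gamma> u \<le> tik B F fd ubar \<gamma> v"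
      using umin vD vF unfolding is_tik_min_def by blast
    have Rd: "R powr (-a) * \<Lambda> powr (-\<kappa>) = \<delta> / K"
    proof -
      have "R powr (-a) * \<Lambda> powr (-\<kappa>) = exp (-a * ln R + (-\<kappa>) * ln \<Lambda>)"
        using R_pos L1 by (simp add: powr_def exp_add[symmetric])
      also have "-a * ln R + (-\<kappa>) * ln \<Lambda> = - ln (K*c) + (-\<Lambda>)"
        unfolding lnR using a_pos by (simp add: field_simps)
      also have "- ln (K*c) + (-\<Lambda>) = (-\<Lambda>) - ln (K*c)" by simp
      also have "exp ((-\<Lambda>) - ln (K*c)) = exp (-\<Lambda>) / exp (ln (K*c))" by (rule exp_diff)
      also have "\<dots> = c*\<delta>/(K*c)" using K_pos c_pos expL by simp
      also have "\<dots> = \<delta>/K" using c_pos by simp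
      finally show ?thesis .
    qed
    have Fv: "norm (F v - fd) \<le> (1+\<epsilon>) * \<delta>"
    proof -
      have "norm (F v - fd) \<le> norm (F v - fdag) + norm (fd - fdag)"
        using norm_triangle_ineq4[of "F v - fdag" "fd - fdag"] by simp
      also have "norm (F v - fdag) \<le> Ca * (R powr (-a) * \<psi> * norm w)"
        using Af2[OF vF vD] n2 Ca_pos by (meson mult_left_mono order_trans less_imp_le)
      also have "Ca * (R powr (-a) * \<psi> * norm w) \<le> Ca * (R powr (-a) * \<Lambda> powr (-\<kappa>) * \<rho>)"
        using Ca_pos psi_le psi0 w_bd by (intro mult_left_mono mult_mono) auto
      also have "\<dots> = \<epsilon> * \<delta>" unfolding Rd using eps_pos rho_pos Ca_pos by (simp add: K_def field_simps)
      finally show ?thesis using fd_bd by (simp add: algebra_simps)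
    qed
    have Bv: "(norm (B (v - ubar)))\<^sup>2 \<le> 2 * \<rho>^2 * Wf \<Lambda>"
    proof -
      have "(R * \<psi>)\<^sup>2 * (norm w)\<^sup>2 \<le> (R * \<Lambda> powr (-\<kappa>))\<^sup>2 * \<rho>^2"
        using R_pos psi_le psi0 w_bd by (intro mult_mono power_mono) auto
      also have "\<dots> = \<rho>^2 * Wf \<Lambda>" by (simp add: Wf_def R_def power_mult_distrib)
      finally show ?thesis using n3 L4 by simp
    qed
    have "(k*\<delta>)^2 \<le> (norm (F u - fd))^2" using ku k_gt d_pos by (intro power_mono) auto
    also have "\<dots> \<le> tik B F fd ubar \<gamma> u" using g_pos by (simp add: tik_def)
    also have "\<dots> \<le> tik B F fd ubar \<gamma> v" by (rule tik_le)
    also have "\<dots> \<le> ((1+\<epsilon>)*\<delta>)^2 + \<gamma> * (2 * \<rho>^2 * Wf \<Lambda>)"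
      unfolding tik_def using Fv Bv g_pos
      by (intro add_mono power_mono mult_left_mono) auto
    finally have "k^2 * \<delta>^2 \<le> (1+\<epsilon>)^2 * \<delta>^2 + \<gamma> * (2 * \<rho>^2 * Wf \<Lambda>)"
      by (simp only: power_mult_distrib)
    hence main: "\<eta> * \<delta>^2 \<le> \<gamma> * (2 * \<rho>^2 * Wf \<Lambda>)"
      by (simp add: \<eta>_def left_diff_distrib)
    have W_pos: "Wf \<Lambda> > 0" using L1 by (simp add: Wf_def Rf_def)
    have ident: "\<delta> powr r * \<Lambda> powr (\<kappa> * r) * Wf \<Lambda> = Q * \<delta>^2"
    proof -
      have pos1: "\<delta> powr r * \<Lambda> powr (\<kappa> * r) * Wf \<Lambda> > 0" using d_pos L1 W_pos by simp
      have pos2: "Q * \<delta>^2 > 0" using Q_pos d_pos by simp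
      have "ln (\<delta> powr r * \<Lambda> powr (\<kappa> * r) * Wf \<Lambda>) = r * ln \<delta> + \<kappa> * r * ln \<Lambda> + (2 * ln R + 2 * (-\<kappa> * ln \<Lambda>))"
        using d_pos L1 R_pos by (simp add: ln_mult ln_powr Wf_def R_def[symmetric] ln_realpow)
      also have "\<dots> = 2 * ln (K*c)/a - r * ln c - 2 * \<Lambda>"
        unfolding ln_d lnR r_def using a_pos by (simp add: field_simps)
      also have "\<dots> = ln (Q * \<delta>^2)"
        using c_pos d_pos by (simp add: Q_def ln_mult ln_realpow ln_d)
      finally show ?thesis using pos1 pos2 by simp
    qed
    have "C * \<delta> powr r * \<Lambda> powr (\<kappa> * r) = \<eta> * \<delta>^2 / (2 * l * \<rho>^2 * Wf \<Lambda>)"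
    proof -
      have X: "\<delta> powr r * \<Lambda> powr (\<kappa> * r) = Q * \<delta>^2 / Wf \<Lambda>" using ident W_pos by (simp add: field_simps)
      have "C * \<delta> powr r * \<Lambda> powr (\<kappa> * r) = C * (\<delta> powr r * \<Lambda> powr (\<kappa> * r))" by (simp add: mult.assoc)
      also have "\<dots> = C * (Q * \<delta>^2 / Wf \<Lambda>)" unfolding X ..
      also have "\<dots> = \<eta> * \<delta>^2 / (2 * l * \<rho>^2 * Wf \<Lambda>)"
        unfolding C_def using Q_pos W_pos l_gt rho_pos by (simp add: field_simps)
      finally show ?thesis .
    qed
    also have "\<dots> \<le> \<gamma> / l"
      using main W_pos rho_pos l_gt by (simp add: field_simps)
    also have "\<dots> \<le> \<alpha>" using g l_gt by (simp add: field_simps)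
    finally show "\<alpha> \<ge> C * \<delta> powr ((2*a+2)/a) * (- ln (c * \<delta>)) powr (\<kappa> * ((2*a+2)/a))"
      unfolding r_def[symmetric] \<Lambda>_def[symmetric] .
  qed
qed

end
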